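(* Let $r\ge 2$, let $H$ be a digraph (possibly with loops) and let $D$ be an $H$-colored $r$-partite tournament. If $k \geq 5$, then $D$ has a $(k,H)$-kernel.
   Context: All digraphs are finite. An $r$-partite tournament is a digraph whose vertex set is partitioned into $r$ disjoint independent sets such that every two vertices in different classes are joined by exactly one arc (an asymmetric arc). $D$ has no loops and comes with a map $\rho: A(D)\to V(H)$. For a walk $W=(x_0,\ldots,x_n)$ in $D$, there is an obstruction on $x_i$ if $(\rho(x_{i-1},x_i),\rho(x_i,x_{i+1})) \notin A(H)$; for an open walk this is considered at internal vertices $x_i$, $1\le i\le n-1$, for a closed walk at all $i\in\{0,\ldots,n-1\}$ with indices modulo $n$. $O_H(W)$ is the set of indices with an obstruction; the $H$-length is $l_H(W)=|O_H(W)|+1$ for open $W$ and $|O_H(W)|$ for closed $W$. A $(k,H)$-kernel ($k\ge2$) is a set $S\subseteq V(D)$ such that for every two distinct $u,v\in S$ every directed $uv$-path in $D$ has $H$-length at least $k$, and for every $x\in V(D)\setminus S$ there is a directed path from $x$ to a vertex of $S$ of $H$-length at most $k-1$. *)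

theory Defs
  imports Main
begin

definition r_partite_tournament ::
  "nat \<Rightarrow> 'a set \<Rightarrow> ('a \<times> 'a) set \<Rightarrow> bool" where
  "r_partite_tournament r V A \<longleftrightarrow> finite V \<and> A \<subseteq> V \<times> V \<and>
     (\<exists>P :: nat \<Rightarrow> 'a set.
        (\<forall>i<r. P i \<noteq> {}) \<and>
        (\<Union>i<r. P i) = V \<and>
        (\<forall>i<r. \<forall>j<r. i \<noteq> j \<longrightarrow> P i \<inter> P j = {}) \<and>
        (\<forall>i<r. \<forall>u\<in>P i. \<forall>v\<in>P i. (u, v) \<notin> A) \<and>
        (\<forall>i<r. \<forall>j<r. i \<noteq> j \<longrightarrow> (\<forall>u\<in>P i. \<forall>v\<in>P j.
            ((u, v) \<in> A \<longleftrightarrow> (v, u) \<notin> A))))"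

definition H_colored :: "('a \<times> 'a) set \<Rightarrow> 'c set \<Rightarrow> ('c \<times> 'c) set \<Rightarrow> ('a \<times> 'a \<Rightarrow> 'c) \<Rightarrow> bool" where
  "H_colored A VH AH \<rho> \<longleftrightarrow> finite VH \<and> AH \<subseteq> VH \<times> VH \<and> (\<forall>e\<in>A. \<rho> e \<in> VH)"

definition is_path :: "('a \<times> 'a) set \<Rightarrow> 'a list \<Rightarrow> bool" where
  "is_path A xs \<longleftrightarrow> xs \<noteq> [] \<and> distinct xs \<and>
     (\<forall>i. Suc i < length xs \<longrightarrow> (xs ! i, xs ! Suc i) \<in> A)"

definition obstructions :: "('c \<times> 'c) set \<Rightarrow> ('a \<times> 'a \<Rightarrow> 'c) \<Rightarrow> 'a list \<Rightarrow> nat set" where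
  "obstructions AH \<rho> xs = {i. 1 \<le> i \<and> Suc i < length xs \<and>
      (\<rho> (xs ! (i - 1), xs ! i), \<rho> (xs ! i, xs ! Suc i)) \<notin> AH}"

definition H_length :: "('c \<times> 'c) set \<Rightarrow> ('a \<times> 'a \<Rightarrow> 'c) \<Rightarrow> 'a list \<Rightarrow> nat" where
  "H_length AH \<rho> xs = card (obstructions AH \<rho> xs) + 1"

definition kH_kernel ::
  "nat \<Rightarrow> 'a set \<Rightarrow> ('a \<times> 'a) set \<Rightarrow> ('c \<times> 'c) set \<Rightarrow> ('a \<times> 'a \<Rightarrow> 'c) \<Rightarrow> 'a set \<Rightarrow> bool" where
  "kH_kernel k V A AH \<rho> S \<longleftrightarrow> S \<subseteq> V \<and>
     (\<forall>u\<in>S. \<forall>v\<in>S. u \<noteq> v \<longrightarrow>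
        (\<forall>xs. is_path A xs \<and> hd xs = u \<and> last xs = v \<longrightarrow> H_length AH \<rho> xs \<ge> k)) \<and>
     (\<forall>x\<in>V - S. \<exists>xs. is_path A xs \<and> hd xs = x \<and> last xs \<in> S \<and>
        H_length AH \<rho> xs \<le> k - 1)"

end

theory Submission imports Defs begin

lemma succ_nth: "successively P xs \<longleftrightarrow> (\<forall>i. Suc i < length xs \<longrightarrow> P (xs ! i) (xs ! Suc i))"
proof (induction xs)
  case Nil then show ?case by simp
next
  case (Cons x xs)
  show ?case
  proof (cases xs)
    case Nil then show ?thesis by simp
  next
    case (Cons y ys)
    have "(\<forall>i. Suc i < length (x # xs) \<longrightarrow> P ((x # xs) ! i) ((x # xs) ! Suc i)) \<longleftrightarrow>
          P x y \<and> (\<forall>i. Suc i < length xs \<longrightarrow> P (xs ! i) (xs ! Suc i))"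
      using Cons by (auto simp: nth_Cons split: nat.splits)
    then show ?thesis using Cons \<open>successively P xs \<longleftrightarrow> _\<close> by simp
  qed
qed

definition walk :: "('a \<times> 'a) set \<Rightarrow> 'a list \<Rightarrow> bool" where
  "walk A xs \<longleftrightarrow> xs \<noteq> [] \<and> successively (\<lambda>x y. (x, y) \<in> A) xs"

lemma walk_to_path:
  "walk A xs \<Longrightarrow> \<exists>ys. is_path A ys \<and> hd ys = hd xs \<and> last ys = last xs \<and> length ys \<le> length xs"
proof (induction "length xs" arbitrary: xs rule: less_induct)
  case less
  show ?case
  proof (cases "distinct xs")
    case True
    then show ?thesis using less.prems
      by (auto simp: is_path_def walk_def succ_nth)
  next
    case False
    then obtain as bs cs y where xs: "xs = as @ [y] @ bs @ [y] @ cs"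
      using not_distinct_decomp by blast
    let ?zs = "as @ [y] @ cs"
    have w: "walk A ?zs"
    proof -
      let ?Q = "\<lambda>x y. (x, y) \<in> A"
      have s: "successively ?Q (as @ ((y # bs) @ (y # cs)))" using less.prems unfolding xs walk_def by simp
      then have s1: "successively ?Q as" and s2: "successively ?Q ((y # bs) @ (y # cs))"
        and s3: "as = [] \<or> ?Q (last as) y"
        unfolding successively_append_iff by auto
      from s2 have "successively ?Q (y # cs)" unfolding successively_append_iff by blast
      then have "successively ?Q (as @ (y # cs))" using s1 s3 unfolding successively_append_iff by auto
      then show ?thesis unfolding walk_def by simp
    qed
    have "length ?zs < length xs" using xs by simp
    then obtain ys where "is_path A ys \<and> hd ys = hd ?zs \<and> last ys = last ?zs \<and> length ys \<le> length ?zs"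
      using less.hyps w by blast
    moreover have "hd ?zs = hd xs" "last ?zs = last xs" using xs by (cases as; simp)+
    ultimately show ?thesis using \<open>length ?zs < length xs\<close> by auto
  qed
qed

lemma H_length_le: "length xs \<le> 5 \<Longrightarrow> H_length AH \<rho> xs \<le> 4"
proof -
  assume "length xs \<le> 5"
  have "obstructions AH \<rho> xs \<subseteq> {1..<length xs - 1}"
    unfolding obstructions_def by auto
  then have "card (obstructions AH \<rho> xs) \<le> length xs - 2"
    by (metis card_atLeastLessThan card_mono diff_diff_left finite_atLeastLessThan one_add_one)
  then show ?thesis using \<open>length xs \<le> 5\<close> unfolding H_length_def by linarith
qed

theorem theorem25:
  fixes r k :: nat and V :: "'a set" and A :: "('a \<times> 'a) set"
    and VH :: "'c set" and AH :: "('c \<times> 'c) set" and \<rho> :: "'a \<times> 'a \<Rightarrow> 'c"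
  assumes "r \<ge> 2"
    and "r_partite_tournament r V A"
    and "H_colored A VH AH \<rho>"
    and "k \<ge> 5"
  shows "\<exists>S. kH_kernel k V A AH \<rho> S"
proof -
  obtain P :: "nat \<Rightarrow> 'a set" where fin: "finite V" and AV: "A \<subseteq> V \<times> V"
    and P1: "\<forall>i<r. P i \<noteq> {}" and P2: "(\<Union>i<r. P i) = V"
    and P3: "\<forall>i<r. \<forall>j<r. i \<noteq> j \<longrightarrow> P i \<inter> P j = {}"
    and P4: "\<forall>i<r. \<forall>u\<in>P i. \<forall>v\<in>P i. (u, v) \<notin> A"
    and P5: "\<forall>i<r. \<forall>j<r. i \<noteq> j \<longrightarrow> (\<forall>u\<in>P i. \<forall>v\<in>P j. ((u, v) \<in> A \<longleftrightarrow> (v, u) \<notin> A))"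
    using assms(2) unfolding r_partite_tournament_def by blast
  define sp where "sp u w \<longleftrightarrow> (\<exists>i<r. u \<in> P i \<and> w \<in> P i)" for u w
  have spA: "\<not> sp u w" if "(u, w) \<in> A" for u w using that P4 unfolding sp_def by blast
  have adj: "(u, w) \<in> A \<or> (w, u) \<in> A" if uw: "u \<in> V" "w \<in> V" "\<not> sp u w" for u w
  proof -
    obtain i j where "i < r" "j < r" "u \<in> P i" "w \<in> P j" using uw(1,2) P2 by blast
    then show ?thesis using uw(3) P5 unfolding sp_def by blast
  qed
  have sptr: "sp u z" if "sp u w" "sp w z" for u w z
    using that P3 unfolding sp_def by blast
  have spsym: "sp u w \<Longrightarrow> sp w u" for u w unfolding sp_def by blast
  have sprefl: "u \<in> V \<Longrightarrow> sp u u" for u using P2 unfolding sp_def by blast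
  have irr: "(u, u) \<notin> A" for u using AV sprefl spA by blast
  have Vne: "V \<noteq> {}" using P1 P2 assms(1) by fastforce
  have pathgen: "\<exists>ys. is_path A ys \<and> hd ys = hd xs \<and> last ys = last xs \<and> H_length AH \<rho> ys \<le> k - 1"
    if wx: "walk A xs" "length xs \<le> 5" for xs
  proof -
    obtain ys where "is_path A ys \<and> hd ys = hd xs \<and> last ys = last xs \<and> length ys \<le> length xs"
      using walk_to_path[OF wx(1)] by blast
    moreover have "length ys \<le> 5 \<Longrightarrow> H_length AH \<rho> ys \<le> k - 1"
      using H_length_le[of ys AH \<rho>] assms(4) by linarith
    ultimately show ?thesis using wx(2) by auto
  qed
  show ?thesis
  proof (cases "\<exists>t\<in>V. \<forall>y. (t, y) \<notin> A")
    case True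
    then obtain t where t: "t \<in> V" "\<forall>y. (t, y) \<notin> A" by blast
    define S where "S = {t\<in>V. \<forall>y. (t, y) \<notin> A}"
    have "kH_kernel k V A AH \<rho> S"
      unfolding kH_kernel_def
    proof (intro conjI ballI allI impI)
      show "S \<subseteq> V" unfolding S_def by blast
    next
      fix u w xs
      assume u: "u \<in> S" and "w \<in> S" and uw: "u \<noteq> w"
        and xs: "is_path A xs \<and> hd xs = u \<and> last xs = w"
      have "length xs \<noteq> 1"
      proof
        assume "length xs = 1"
        then obtain z where "xs = [z]" by (cases xs) auto
        then show False using xs uw by auto
      qed
      moreover have "xs \<noteq> []" using xs unfolding is_path_def by blast
      ultimately have "Suc 0 < length xs" by (cases xs) auto
      then have "(xs ! 0, xs ! Suc 0) \<in> A" using xs unfolding is_path_def by blast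
      moreover have "xs ! 0 = u" using xs \<open>xs \<noteq> []\<close> by (simp add: hd_conv_nth)
      ultimately show "k \<le> H_length AH \<rho> xs" using u unfolding S_def by blast
    next
      fix x assume x: "x \<in> V - S"
      then obtain y where xy: "(x, y) \<in> A" unfolding S_def by blast
      have tS: "t \<in> S" using t unfolding S_def by blast
      have "\<exists>zs. walk A zs \<and> hd zs = x \<and> last zs = t \<and> length zs \<le> 5"
      proof (cases "sp x t")
        case False
        then have "(x, t) \<in> A" using adj[of x t] x t by blast
        then show ?thesis by (intro exI[of _ "[x, t]"]) (simp add: walk_def)
      next
        case True
        have "\<not> sp x y" using spA xy by blast
        then have "\<not> sp y t" using True sptr spsym by blast
        moreover have "y \<in> V" using xy AV by blast
        ultimately have "(y, t) \<in> A" using adj[of y t] t by blast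
        then show ?thesis using xy by (intro exI[of _ "[x, y, t]"]) (simp add: walk_def)
      qed
      then show "\<exists>xs. is_path A xs \<and> hd xs = x \<and> last xs \<in> S \<and> H_length AH \<rho> xs \<le> k - 1"
        using pathgen tS by metis
    qed
    then show ?thesis by blast
  next
    case False
    then have nosink: "\<forall>t\<in>V. \<exists>y. (t, y) \<in> A" by blast
    define R2 where "R2 v = {u\<in>V. u \<noteq> v \<and> ((u, v) \<in> A \<or> (\<exists>w. (u, w) \<in> A \<and> (w, v) \<in> A))}" for v
    have R2V: "R2 v \<subseteq> V" for v unfolding R2_def by blast
    obtain v0 where "v0 \<in> V" using Vne by blast
    have "\<exists>x. x \<in> V \<and> (\<forall>y. y \<in> V \<longrightarrow> card (R2 y) \<le> card (R2 x))"
    proof (rule ex_has_greatest_nat[where b = "Suc (card V)"])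
      show "v0 \<in> V" by fact
      show "\<forall>y. y \<in> V \<longrightarrow> card (R2 y) < Suc (card V)"
        using card_mono[OF fin R2V] by (simp add: le_imp_less_Suc)
    qed
    then obtain v where v: "v \<in> V" and vmax: "\<And>y. y \<in> V \<Longrightarrow> card (R2 y) \<le> card (R2 v)"
      by blast
    have claim1: "\<exists>zs. walk A zs \<and> hd zs = a \<and> last zs = v \<and> length zs \<le> 4"
      if a: "a \<in> V" "\<not> sp a v" for a
    proof (rule ccontr)
      assume nr: "\<not> ?thesis"
      have n1: "(a, v) \<notin> A"
      proof
        assume "(a, v) \<in> A"
        then have "walk A [a, v]" by (simp add: walk_def)
        then show False using nr by fastforce
      qed
      have n2: "\<not> ((a, w) \<in> A \<and> (w, v) \<in> A)" for w
      proof
        assume h: "(a, w) \<in> A \<and> (w, v) \<in> A"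
        have "walk A [a, w, v]" using h by (simp add: walk_def)
        then show False using nr by fastforce
      qed
      have n3: "\<not> ((a, b) \<in> A \<and> (b, w) \<in> A \<and> (w, v) \<in> A)" for b w
      proof
        assume h: "(a, b) \<in> A \<and> (b, w) \<in> A \<and> (w, v) \<in> A"
        have "walk A [a, b, w, v]" using h by (simp add: walk_def)
        then show False using nr by fastforce
      qed
      have va: "(v, a) \<in> A" using adj[of a v] a v n1 by blast
      have aR: "a \<notin> R2 v" using n1 n2 unfolding R2_def by blast
      have sub: "insert v (R2 v) \<subseteq> R2 a"
      proof
        fix u assume "u \<in> insert v (R2 v)"
        then consider "u = v" | "u \<in> R2 v" by blast
        then show "u \<in> R2 a"
        proof cases
          case 1 then show ?thesis using va v irr unfolding R2_def by blast
        next
          case 2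
          have uV: "u \<in> V" and uv: "u \<noteq> v" using 2 unfolding R2_def by auto
          have ua: "u \<noteq> a" using 2 aR by blast
          show ?thesis
          proof (cases "sp u a")
            case False
            have "(a, u) \<notin> A" using 2 n2 n3 unfolding R2_def by blast
            then have "(u, a) \<in> A" using adj[of u a] uV a False by blast
            then show ?thesis using uV ua unfolding R2_def by blast
          next
            case True
            show ?thesis
            proof (cases "(u, v) \<in> A")
              case True
              then show ?thesis using va uV ua unfolding R2_def by blast
            next
              case False
              then obtain w where uw: "(u, w) \<in> A" "(w, v) \<in> A" using 2 unfolding R2_def by blast
              have "\<not> sp u w" using spA uw by blast
              then have "\<not> sp w a" using \<open>sp u a\<close> sptr spsym by blast
              moreover have "w \<in> V" using uw AV by blast
              moreover have "(a, w) \<notin> A" using n2 uw by blast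
              ultimately have "(w, a) \<in> A" using adj[of w a] a by blast
              then show ?thesis using uw uV ua unfolding R2_def by blast
            qed
          qed
        qed
      qed
      have "v \<notin> R2 v" unfolding R2_def by blast
      then have "card (insert v (R2 v)) = Suc (card (R2 v))"
        using finite_subset[OF R2V fin] by simp
      moreover have "card (insert v (R2 v)) \<le> card (R2 a)"
        using card_mono[OF finite_subset[OF R2V fin] sub] .
      ultimately show False using vmax[OF a(1)] by linarith
    qed
    have claim2: "\<exists>zs. walk A zs \<and> hd zs = x \<and> last zs = v \<and> length zs \<le> 5"
      if x: "x \<in> V" for x
    proof (cases "sp x v")
      case False
      then show ?thesis using claim1[OF x] by fastforce
    next
      case True
      obtain y where xy: "(x, y) \<in> A" using nosink x by blast
      have "\<not> sp x y" using spA xy by blast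
      then have "\<not> sp y v" using True sptr spsym by blast
      moreover have "y \<in> V" using xy AV by blast
      ultimately obtain zs where zs: "walk A zs" "hd zs = y" "last zs = v" "length zs \<le> 4"
        using claim1 by blast
      have "zs \<noteq> []" using zs(1) unfolding walk_def by blast
      then have "walk A (x # zs)" using zs xy by (simp add: walk_def successively_Cons)
      then show ?thesis using zs \<open>zs \<noteq> []\<close> by (intro exI[of _ "x # zs"]) simp
    qed
    have "kH_kernel k V A AH \<rho> {v}"
      unfolding kH_kernel_def
    proof (intro conjI ballI allI impI)
      show "{v} \<subseteq> V" using v by blast
    next
      fix u w xs assume "u \<in> {v}" "w \<in> {v}" "u \<noteq> w"
      then show "k \<le> H_length AH \<rho> xs" by blast
    next
      fix x assume "x \<in> V - {v}"
      then obtain zs where "walk A zs \<and> hd zs = x \<and> last zs = v \<and> length zs \<le> 5"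
        using claim2 by blast
      then show "\<exists>xs. is_path A xs \<and> hd xs = x \<and> last xs \<in> {v} \<and> H_length AH \<rho> xs \<le> k - 1"
        using pathgen by fastforce
    qed
    then show ?thesis by blast
  qed
qed

end
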